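(* If independent random variables $X_1,X_2,X_3$ are uniformly distributed on intervals of lengths $a_1,a_2,a_3>0$, then $$I(X_1+X_2+X_3)\le 2\Big[\frac1{a_1a_2}+\frac1{a_1a_3}+\frac1{a_2a_3}\Big].$$
   Context: Fisher information: for $X$ with absolutely continuous density $p$, $I(X)=\int_{\{p>0\}}p'^2/p\,dx$, otherwise $+\infty$. *)

theory Defs
  imports "HOL-Probability.Probability"
begin

definition abs_cont_interval :: "(real \<Rightarrow> real) \<Rightarrow> real \<Rightarrow> real \<Rightarrow> bool" where
  "abs_cont_interval f a b \<longleftrightarrow>
     (\<forall>e>0. \<exists>d>0. \<forall>(n::nat) (l::nat \<Rightarrow> real) (r::nat \<Rightarrow> real).
        (\<forall>i<n. a \<le> l i \<and> l i \<le> r i \<and> r i \<le> b) \<and>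
        (\<forall>i<n. \<forall>j<n. i \<noteq> j \<longrightarrow> r i \<le> l j \<or> r j \<le> l i) \<and>
        (\<Sum>i<n. r i - l i) < d
        \<longrightarrow> (\<Sum>i<n. \<bar>f (r i) - f (l i)\<bar>) < e)"

definition abs_cont :: "(real \<Rightarrow> real) \<Rightarrow> bool" where
  "abs_cont f \<longleftrightarrow> (\<forall>a b. abs_cont_interval f a b)"

definition ac_density :: "real measure \<Rightarrow> (real \<Rightarrow> real) \<Rightarrow> bool" where
  "ac_density \<mu> p \<longleftrightarrow> abs_cont p \<and> (\<forall>x. 0 \<le> p x) \<and> \<mu> = density lborel (\<lambda>x. ennreal (p x))"

definition fisher_info :: "real measure \<Rightarrow> ennreal" where
  "fisher_info \<mu> =
     (if \<exists>p. ac_density \<mu> p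
      then (let p = (SOME p. ac_density \<mu> p) in
            \<integral>\<^sup>+ x. indicator {x. 0 < p x} x * ennreal ((deriv p x)\<^sup>2 / p x) \<partial>lborel)
      else \<infinity>)"

end

theory Submission
  imports Defs
begin


definition Qf :: "real \<Rightarrow> real" where "Qf u = (max u 0)^2 / 2"

lemma DERIV_Qf: "DERIV Qf u :> max u 0"
proof -
  consider "u > 0" | "u < 0" | "u = 0" by linarith
  then show ?thesis
  proof cases
    case 1
    have "DERIV (\<lambda>u. u^2/2) u :> u" by (auto intro!: derivative_eq_intros)
    then have "DERIV Qf u :> u"
      by (rule has_field_derivative_transform_within_open[where S="{0<..}"]) (use 1 in \<open>auto simp: Qf_def\<close>)
    then show ?thesis using 1 by simp
  next
    case 2
    have "DERIV (\<lambda>u. 0) u :> 0" by (auto intro!: derivative_eq_intros)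
    then have "DERIV Qf u :> 0"
      by (rule has_field_derivative_transform_within_open[where S="{..<0}"]) (use 2 in \<open>auto simp: Qf_def\<close>)
    then show ?thesis using 2 by simp
  next
    case 3
    have "((\<lambda>h. max h 0 / 2) \<longlongrightarrow> max 0 0 / 2) (at (0::real))"
      by (intro tendsto_intros) auto
    then have "((\<lambda>h. max h 0 / 2) \<longlongrightarrow> 0) (at (0::real))" by simp
    moreover have "\<forall>\<^sub>F h in at 0. max h 0 / 2 = (Qf (0 + h) - Qf 0) / h"
      unfolding eventually_at_filter
      by (auto simp: Qf_def max_def power2_eq_square)
    ultimately have "((\<lambda>h. (Qf (0 + h) - Qf 0) / h) \<longlongrightarrow> 0) (at (0::real))"
      by (rule Lim_transform_eventually)
    then show ?thesis using 3 by (simp add: DERIV_def)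
  qed
qed

lemma DERIV_Qf_chain[derivative_intros]:
  "DERIV g x :> g' \<Longrightarrow> DERIV (\<lambda>x. Qf (g x)) x :> max (g x) 0 * g'"
  by (rule DERIV_chain2[OF DERIV_Qf])

definition L2 :: "real \<Rightarrow> real \<Rightarrow> real \<Rightarrow> real" where
 "L2 a b u = max u 0 - max (u-a) 0 - max (u-b) 0 + max (u-a-b) 0"
definition G2 :: "real \<Rightarrow> real \<Rightarrow> real \<Rightarrow> real" where
 "G2 a b u = Qf u - Qf (u-a) - Qf (u-b) + Qf (u-a-b)"

lemma L2_len: "a>0 \<Longrightarrow> b>0 \<Longrightarrow> L2 a b u = max 0 (min u b - max (u-a) 0)"
  unfolding L2_def by (smt (verit))

lemma L2_bounds: "a>0 \<Longrightarrow> b>0 \<Longrightarrow> 0 \<le> L2 a b u \<and> L2 a b u \<le> a"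
  unfolding L2_def by (smt (verit))

lemma L2_lip: "a1>0 \<Longrightarrow> a2>0 \<Longrightarrow> a3 > 0 \<Longrightarrow> x \<le> y \<Longrightarrow>
  (L2 a1 a2 y - L2 a1 a2 (y-a3)) - (L2 a1 a2 x - L2 a1 a2 (x - a3)) \<le> y - x"
  unfolding L2_def by (smt (verit))

lemma DERIV_G2: "DERIV (G2 a b) u :> L2 a b u"
  unfolding G2_def L2_def by (auto intro!: derivative_eq_intros)

lemma G2_integral:
  assumes "lo \<le> hi"
  shows "((\<lambda>y. L2 a b (y - k)) has_integral (G2 a b (hi-k) - G2 a b (lo-k))) {lo..hi}"
proof -
  have "((\<lambda>y. G2 a b (y - k)) has_real_derivative L2 a b (y - k) * 1) (at y)" for y
    by (rule DERIV_chain2[OF DERIV_G2]) (auto intro!: derivative_eq_intros)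
  then show ?thesis
    by (intro fundamental_theorem_of_calculus[OF assms])
       (auto simp: has_real_derivative_iff_has_vector_derivative[symmetric] intro: has_field_derivative_at_within)
qed

definition pfun :: "real \<Rightarrow> real \<Rightarrow> real \<Rightarrow> real \<Rightarrow> real \<Rightarrow> real" where
  "pfun a1 a2 a3 C x = (G2 a1 a2 (x-C) - G2 a1 a2 (x-C-a3)) / (a1*a2*a3)"
definition dfun :: "real \<Rightarrow> real \<Rightarrow> real \<Rightarrow> real \<Rightarrow> real \<Rightarrow> real" where
  "dfun a1 a2 a3 C x = (L2 a1 a2 (x-C) - L2 a1 a2 (x-C-a3)) / (a1*a2*a3)"

lemma DERIV_pfun: "DERIV (pfun a1 a2 a3 C) x :> dfun a1 a2 a3 C x"
proof -
  have 1: "DERIV (\<lambda>x. G2 a1 a2 (x-C)) x :> L2 a1 a2 (x-C) * 1"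
    by (rule DERIV_chain2[OF DERIV_G2]) (auto intro!: derivative_eq_intros)
  have 2: "DERIV (\<lambda>x. G2 a1 a2 (x-C-a3)) x :> L2 a1 a2 (x-C-a3) * 1"
    by (rule DERIV_chain2[OF DERIV_G2]) (auto intro!: derivative_eq_intros)
  show ?thesis
  proof -
    have 3: "DERIV (\<lambda>x. G2 a1 a2 (x-C) - G2 a1 a2 (x-C-a3)) x :> L2 a1 a2 (x-C) - L2 a1 a2 (x-C-a3)"
      using 1 2 by (auto intro!: derivative_eq_intros)
    show ?thesis using DERIV_cdivide[OF 3, of "a1*a2*a3"] unfolding pfun_def[abs_def] dfun_def by simp
  qed
qed

lemma pfun_nonneg:
  assumes "a1 > 0" "a2 > 0" "a3 > 0"
  shows "0 \<le> pfun a1 a2 a3 C x"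
proof -
  have "((\<lambda>y. L2 a1 a2 (y - 0)) has_integral (G2 a1 a2 (x-C-0) - G2 a1 a2 (x-C-a3-0))) {x-C-a3..x-C}"
    using assms by (intro G2_integral) auto
  then have "((\<lambda>y. L2 a1 a2 y) has_integral (G2 a1 a2 (x-C) - G2 a1 a2 (x-C-a3))) {x-C-a3..x-C}"
    by simp
  then have "0 \<le> G2 a1 a2 (x-C) - G2 a1 a2 (x-C-a3)"
    by (rule has_integral_nonneg) (use L2_bounds assms in auto)
  then show ?thesis unfolding pfun_def using assms by simp
qed

lemma dfun_lip:
  assumes "a1 > 0" "a2 > 0" "a3 > 0" "x \<le> y"
  shows "dfun a1 a2 a3 C y - dfun a1 a2 a3 C x \<le> (1/(a1*a2*a3)) * (y - x)"
proof -
  have "(L2 a1 a2 (y-C) - L2 a1 a2 (y-C-a3)) - (L2 a1 a2 (x-C) - L2 a1 a2 (x-C - a3)) \<le> (y-C) - (x-C)"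
    using L2_lip[OF assms(1-3), of "x-C" "y-C"] assms by simp
  then have "((L2 a1 a2 (y-C) - L2 a1 a2 (y-C-a3)) - (L2 a1 a2 (x-C) - L2 a1 a2 (x-C - a3))) / (a1*a2*a3)
     \<le> ((y-C) - (x-C)) / (a1*a2*a3)"
    by (rule divide_right_mono) (use assms in auto)
  then show ?thesis unfolding dfun_def by (simp add: diff_divide_distrib)
qed

lemma dfun_bound:
  assumes "a1 > 0" "a2 > 0" "a3 > 0"
  shows "\<bar>dfun a1 a2 a3 C x\<bar> \<le> 1/(a2*a3)"
proof -
  have "\<bar>L2 a1 a2 (x-C) - L2 a1 a2 (x-C-a3)\<bar> \<le> a1"
    using L2_bounds[OF assms(1,2), of "x-C"] L2_bounds[OF assms(1,2), of "x-C-a3"] by linarith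
  then show ?thesis unfolding dfun_def using assms
    by (simp add: abs_div field_simps)
qed

lemma glaeser:
  fixes f f' :: "real \<Rightarrow> real"
  assumes D: "\<And>x. DERIV f x :> f' x" and nn: "\<And>x. 0 \<le> f x" and K: "K > 0"
    and lip: "\<And>x y. x \<le> y \<Longrightarrow> f' y - f' x \<le> K*(y-x)"
  shows "(f' x)^2 \<le> 2*K*f x"
proof -
  define \<phi> where "\<phi> t = f (x+t) - f x - t * f' x - K*t^2/2" for t
  have Dphi: "DERIV \<phi> t :> f'(x+t) - f' x - K*t" for t
  proof -
    have "((\<lambda>t. f (x+t)) has_real_derivative f' (x+t) * 1) (at t)"
      by (rule DERIV_chain2[OF D]) (auto intro!: derivative_eq_intros)
    then show ?thesis unfolding \<phi>_def
      by (auto intro!: derivative_eq_intros)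
  qed
  have taylor: "\<phi> h \<le> 0" for h
  proof -
    consider "h > 0" | "h < 0" | "h = 0" by linarith
    then show ?thesis
    proof cases
      case 1
      from MVT2[OF 1 Dphi] obtain z where z: "0 < z" "z < h"
        "\<phi> h - \<phi> 0 = (h - 0) * (f'(x+z) - f' x - K*z)" by blast
      have "f'(x+z) - f' x \<le> K*z" using lip[of x "x+z"] z by simp
      then have "(h - 0) * (f'(x+z) - f' x - K*z) \<le> 0" using 1
        by (intro mult_nonneg_nonpos) auto
      then show ?thesis using z by (simp add: \<phi>_def)
    next
      case 2
      from MVT2[OF 2 Dphi] obtain z where z: "h < z" "z < 0"
        "\<phi> 0 - \<phi> h = (0 - h) * (f'(x+z) - f' x - K*z)" by blast
      have "f' x - f'(x+z) \<le> K*(-z)" using lip[of "x+z" x] z by simp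
      then have "(0 - h) * (f'(x+z) - f' x - K*z) \<ge> 0" using 2
        by (intro mult_nonneg_nonneg) auto
      then show ?thesis using z by (simp add: \<phi>_def)
    qed (simp add: \<phi>_def)
  qed
  define h where "h = - f' x / K"
  have "0 \<le> f (x+h)" by (rule nn)
  also have "f (x+h) \<le> f x + h * f' x + K*h^2/2"
    using taylor[of h] by (simp add: \<phi>_def)
  also have "\<dots> = f x - (f' x)^2 / (2*K)"
    using K by (simp add: h_def field_simps power2_eq_square)
  finally show ?thesis using K by (simp add: field_simps)
qed

lemma lipschitz_from_deriv:
  fixes f f' :: "real \<Rightarrow> real"
  assumes D: "\<And>x. DERIV f x :> f' x" and B: "\<And>x. \<bar>f' x\<bar> \<le> B" and "l \<le> r"
  shows "\<bar>f r - f l\<bar> \<le> B * (r - l)"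
proof (cases "l = r")
  case False
  then have "l < r" using assms by simp
  from MVT2[OF this D] obtain z where "f r - f l = (r - l) * f' z" by blast
  then have "\<bar>f r - f l\<bar> = (r - l) * \<bar>f' z\<bar>" using \<open>l < r\<close> by (simp add: abs_mult)
  also have "\<dots> \<le> (r - l) * B" using B[of z] \<open>l < r\<close> by (intro mult_left_mono) auto
  finally show ?thesis by (simp add: mult.commute)
qed simp

lemma abs_cont_from_deriv:
  fixes f f' :: "real \<Rightarrow> real"
  assumes D: "\<And>x. DERIV f x :> f' x" and B: "\<And>x. \<bar>f' x\<bar> \<le> B"
  shows "abs_cont f"
  unfolding abs_cont_def abs_cont_interval_def
proof (intro allI impI)
  fix a b e :: real assume e: "e > 0"
  have B0: "0 \<le> B" using B[of 0] by linarith
  show "\<exists>d>0. \<forall>(n::nat) l r. (\<forall>i<n. a \<le> l i \<and> l i \<le> r i \<and> r i \<le> b) \<and>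
        (\<forall>i<n. \<forall>j<n. i \<noteq> j \<longrightarrow> r i \<le> l j \<or> r j \<le> l i) \<and> (\<Sum>i<n. r i - l i) < d
        \<longrightarrow> (\<Sum>i<n. \<bar>f (r i) - f (l i)\<bar>) < e"
  proof (intro exI[of _ "e/(B+1)"] conjI allI impI)
    show "0 < e/(B+1)" using e B0 by simp
    fix n :: nat and l r :: "nat \<Rightarrow> real"
    assume H: "(\<forall>i<n. a \<le> l i \<and> l i \<le> r i \<and> r i \<le> b) \<and>
        (\<forall>i<n. \<forall>j<n. i \<noteq> j \<longrightarrow> r i \<le> l j \<or> r j \<le> l i) \<and> (\<Sum>i<n. r i - l i) < e/(B+1)"
    have S0: "0 \<le> (\<Sum>i<n. r i - l i)" using H by (intro sum_nonneg) auto
    have "(\<Sum>i<n. \<bar>f (r i) - f (l i)\<bar>) \<le> (\<Sum>i<n. B * (r i - l i))"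
      using H by (intro sum_mono lipschitz_from_deriv[OF D B]) auto
    also have "\<dots> = B * (\<Sum>i<n. r i - l i)" by (simp add: sum_distrib_left)
    also have "\<dots> \<le> (B+1) * (\<Sum>i<n. r i - l i)" using S0 by (simp add: distrib_right)
    also have "\<dots> < (B+1) * (e/(B+1))" using H B0 by (intro mult_strict_left_mono) auto
    also have "\<dots> = e" using B0 by simp
    finally show "(\<Sum>i<n. \<bar>f (r i) - f (l i)\<bar>) < e" .
  qed
qed

lemma G2_far:
  assumes "a1 > 0" "a2 > 0" "a3 > 0" "u > a1 + a2 + a3"
  shows "G2 a1 a2 u - G2 a1 a2 (u-a3) = 0"
proof -
  have m: "max u 0 = u" "max (u-a1) 0 = u-a1" "max (u-a2) 0 = u-a2" "max (u-a1-a2) 0 = u-a1-a2"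
    "max (u-a3) 0 = u-a3" "max (u-a3-a1) 0 = u-a3-a1" "max (u-a3-a2) 0 = u-a3-a2" "max (u-a3-a1-a2) 0 = u-a3-a1-a2"
    using assms by auto
  show ?thesis unfolding G2_def Qf_def m by (simp add: power2_eq_square field_simps)
qed

lemma pfun_support:
  assumes "a1 > 0" "a2 > 0" "a3 > 0" "0 < pfun a1 a2 a3 C x"
  shows "x \<in> {C .. C + a1 + a2 + a3}"
proof (rule ccontr)
  assume "x \<notin> {C .. C + a1 + a2 + a3}"
  then consider "x < C" | "x > C + a1 + a2 + a3" by auto
  then have "pfun a1 a2 a3 C x = 0"
  proof cases
    case 1
    then show ?thesis using assms by (simp add: pfun_def G2_def Qf_def)
  next
    case 2
    then show ?thesis using assms G2_far[OF assms(1-3), of "x - C"] by (simp add: pfun_def)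
  qed
  then show False using assms by simp
qed



lemma cont_ae_eq:
  fixes f g :: "real \<Rightarrow> real"
  assumes "continuous_on UNIV f" "continuous_on UNIV g" "AE x in lborel. f x = g x"
  shows "f x = g x"
proof -
  have "closed {x. f x = g x}" using assms by (intro closed_Collect_eq) auto
  moreover have "AE x in lebesgue. x \<in> {x. f x = g x}"
    using AE_completion[OF assms(3)] by simp
  ultimately have "x \<in> {x. f x = g x}" by (rule mem_closed_if_AE_lebesgue)
  then show ?thesis by simp
qed

lemma abs_cont_imp_cont:
  assumes "abs_cont f"
  shows "continuous_on UNIV f"
  unfolding continuous_on_iff
proof (intro ballI allI impI)
  fix x e :: real assume e: "0 < e"
  from assms have "abs_cont_interval f (x-1) (x+1)" by (simp add: abs_cont_def)
  then obtain d where d: "d > 0" and H: "\<And>(n::nat) l r.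
        (\<forall>i<n. x-1 \<le> l i \<and> l i \<le> r i \<and> r i \<le> x+1) \<and>
        (\<forall>i<n. \<forall>j<n. i \<noteq> j \<longrightarrow> r i \<le> l j \<or> r j \<le> l i) \<and>
        (\<Sum>i<n. r i - l i) < d
        \<longrightarrow> (\<Sum>i<n. \<bar>f (r i) - f (l i)\<bar>) < e"
    unfolding abs_cont_interval_def using e by blast
  show "\<exists>d>0. \<forall>x'\<in>UNIV. dist x' x < d \<longrightarrow> dist (f x') (f x) < e"
  proof (intro exI[of _ "min d 1"] conjI ballI impI)
    show "0 < min d 1" using d by simp
    fix y assume "dist y x < min d 1"
    then have y: "\<bar>y - x\<bar> < d" "\<bar>y - x\<bar> < 1" by (auto simp: dist_real_def)
    have c1: "\<forall>i<Suc 0. x-1 \<le> min x y \<and> min x y \<le> max x y \<and> max x y \<le> x+1"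
      using y by (auto simp: abs_if split: if_splits)
    have c3: "(\<Sum>i<Suc 0. max x y - min x y) < d"
      using y by (auto simp: abs_if max_def min_def split: if_splits)
    note hh = H[of "Suc 0" "\<lambda>_. min x y" "\<lambda>_. max x y"]
    have "\<bar>f (max x y) - f (min x y)\<bar> < e" using hh c1 c3 by simp
    then show "dist (f y) (f x) < e"
      by (cases "x \<le> y") (auto simp: dist_real_def max_def min_def abs_minus_commute)
  qed
qed

lemma inv_ennreal: "a > 0 \<Longrightarrow> (1::ennreal) / ennreal a = ennreal (1/a)"
  using divide_ennreal[of 1 a] by simp

lemma conv1:
  assumes a1: "a1 > 0" and a2: "a2 > 0"
  shows "(\<integral>\<^sup>+ y. (indicator {c1..c1+a1} (x - y) / ennreal a1) * (indicator {c2..c2+a2} y / ennreal a2) \<partial>lborel)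
     = ennreal (L2 a1 a2 (x-c1-c2) / (a1*a2))"
proof -
  let ?lo = "max (x-c1-a1) c2" and ?hi = "min (x-c1) (c2+a2)"
  have "(\<integral>\<^sup>+ y. (indicator {c1..c1+a1} (x - y) / ennreal a1) * (indicator {c2..c2+a2} y / ennreal a2) \<partial>lborel)
      = (\<integral>\<^sup>+ y. ennreal (1/(a1*a2)) * indicator {?lo..?hi} y \<partial>lborel)"
  proof (intro nn_integral_cong)
    fix y
    have "(1 / ennreal a1) * (1 / ennreal a2) = ennreal (1/(a1*a2))"
      using a1 a2 by (simp add: inv_ennreal ennreal_mult[symmetric])
    then show "(indicator {c1..c1+a1} (x - y) / ennreal a1) * (indicator {c2..c2+a2} y / ennreal a2)
       = ennreal (1/(a1*a2)) * indicator {?lo..?hi} y"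
      by (auto split: split_indicator)
  qed
  also have "\<dots> = ennreal (1/(a1*a2)) * emeasure lborel {?lo..?hi}"
    by (intro nn_integral_cmult_indicator) auto
  also have "\<dots> = ennreal (1/(a1*a2)) * ennreal (L2 a1 a2 (x-c1-c2))"
  proof -
    have "(if ?lo \<le> ?hi then ?hi - ?lo else 0) = L2 a1 a2 (x-c1-c2)"
      using L2_len[OF a1 a2, of "x-c1-c2"] by (smt (verit))
    then show ?thesis by (simp add: emeasure_lborel_Icc_eq)
  qed
  also have "\<dots> = ennreal (L2 a1 a2 (x-c1-c2) / (a1*a2))"
    using L2_bounds[OF a1 a2, of "x-c1-c2"] a1 a2 by (simp add: ennreal_mult[symmetric])
  finally show ?thesis .
qed

lemma conv2:
  assumes a1: "a1 > 0" and a2: "a2 > 0" and a3: "a3 > 0"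
  shows "(\<integral>\<^sup>+ y. (indicator {c3..c3+a3} (x - y) / ennreal a3) * ennreal (L2 a1 a2 (y-c1-c2) / (a1*a2)) \<partial>lborel)
     = ennreal (pfun a1 a2 a3 (c1+c2+c3) x)"
proof -
  have "(\<integral>\<^sup>+ y. (indicator {c3..c3+a3} (x - y) / ennreal a3) * ennreal (L2 a1 a2 (y-c1-c2) / (a1*a2)) \<partial>lborel)
    = (\<integral>\<^sup>+ y. ennreal (L2 a1 a2 (y-(c1+c2)) * (1/(a1*a2*a3))) * indicator {x-c3-a3..x-c3} y \<partial>lborel)"
  proof (intro nn_integral_cong)
    fix y
    have "(1 / ennreal a3) * ennreal (L2 a1 a2 (y-c1-c2) / (a1*a2)) = ennreal (L2 a1 a2 (y-(c1+c2)) * (1/(a1*a2*a3)))"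
      using a1 a2 a3 L2_bounds[OF a1 a2, of "y-c1-c2"]
      by (simp add: inv_ennreal ennreal_mult[symmetric] diff_diff_eq)
    then show "(indicator {c3..c3+a3} (x - y) / ennreal a3) * ennreal (L2 a1 a2 (y-c1-c2) / (a1*a2))
      = ennreal (L2 a1 a2 (y-(c1+c2)) * (1/(a1*a2*a3))) * indicator {x-c3-a3..x-c3} y"
      by (auto split: split_indicator simp: mult.commute)
  qed
  also have "\<dots> = ennreal ((G2 a1 a2 (x-c3-(c1+c2)) - G2 a1 a2 (x-c3-a3-(c1+c2))) * (1/(a1*a2*a3)))"
  proof (intro nn_integral_has_integral_lebesgue')
    show "((\<lambda>y. L2 a1 a2 (y-(c1+c2)) * (1/(a1*a2*a3))) has_integral
        ((G2 a1 a2 (x-c3-(c1+c2)) - G2 a1 a2 (x-c3-a3-(c1+c2))) * (1/(a1*a2*a3)))) {x-c3-a3..x-c3}"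
      by (intro has_integral_mult_left G2_integral) (use a3 in auto)
    fix y show "0 \<le> L2 a1 a2 (y-(c1+c2)) * (1/(a1*a2*a3))"
      using L2_bounds[OF a1 a2] a1 a2 a3 by simp
  qed
  also have "\<dots> = ennreal (pfun a1 a2 a3 (c1+c2+c3) x)"
  proof -
    have "x-c3-(c1+c2) = x - (c1+c2+c3)" "x-c3-a3-(c1+c2) = x - (c1+c2+c3) - a3" by simp_all
    then show ?thesis unfolding pfun_def by (simp add: algebra_simps diff_divide_distrib)
  qed
  finally show ?thesis .
qed



theorem lemma4p2:
  fixes M :: "'a measure" and X :: "nat \<Rightarrow> 'a \<Rightarrow> real" and a c :: "nat \<Rightarrow> real"
  assumes "prob_space M"
    and "prob_space.indep_vars M (\<lambda>_. borel) X {1, 2, 3}"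
    and "\<And>i. i \<in> {1, 2, 3} \<Longrightarrow> 0 < a i"
    and "\<And>i. i \<in> {1, 2, 3} \<Longrightarrow> distr M lborel (X i) = uniform_measure lborel {c i .. c i + a i}"
  shows "fisher_info (distr M lborel (\<lambda>\<omega>. X 1 \<omega> + X 2 \<omega> + X 3 \<omega>))
           \<le> ennreal (2 * (1 / (a 1 * a 2) + 1 / (a 1 * a 3) + 1 / (a 2 * a 3)))"
proof -
  interpret P: prob_space M by fact
  have a1: "a 1 > 0" and a2: "a 2 > 0" and a3: "a 3 > 0" using assms(3) by auto
  have rv: "X i \<in> borel_measurable M" if "i \<in> {1,2,3}" for i
    using assms(2) that unfolding P.indep_vars_def by auto
  have rv1[measurable]: "X 1 \<in> borel_measurable M" and rv2[measurable]: "X 2 \<in> borel_measurable M"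
    and rv3[measurable]: "X 3 \<in> borel_measurable M" using rv by auto
  have ind12: "P.indep_var borel (X 1) borel (X 2)"
  proof -
    have "P.indep_vars (\<lambda>_. borel) X (insert 1 {2::nat})"
      using P.indep_vars_subset[OF assms(2)] by auto
    from P.indep_vars_sum[OF _ _ this] show ?thesis by simp
  qed
  have ind3: "P.indep_var borel (X 3) borel (\<lambda>\<omega>. X 1 \<omega> + X 2 \<omega>)"
  proof -
    have "P.indep_vars (\<lambda>_. borel) X (insert 3 {1,2::nat})"
      using assms(2) by (simp add: insert_commute)
    from P.indep_vars_sum[OF _ _ this] show ?thesis by simp
  qed
  define f where "f i = (\<lambda>x. indicator {c i..c i + a i} x / ennreal (a i) :: ennreal)" for i
  have Di: "distr M lborel (X i) = density lborel (f i)" if "i \<in> {1,2,3}" for i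
    using assms(4)[OF that] assms(3)[OF that] by (simp add: uniform_measure_def f_def)
  have fmeas: "f i \<in> borel_measurable borel" for i
    unfolding f_def by measurable
  have fin: "finite_measure (density lborel (f i))" if "i \<in> {1,2,3}" for i
  proof -
    have "prob_space (distr M lborel (X i))"
      by (rule P.prob_space_distr) (simp add: rv[OF that])
    then show ?thesis using Di[OF that] by (simp add: prob_space_def)
  qed
  have D12: "distr M lborel (\<lambda>\<omega>. X 1 \<omega> + X 2 \<omega>)
      = density lborel (\<lambda>x. ennreal (L2 (a 1) (a 2) (x - c 1 - c 2) / (a 1 * a 2)))"
  proof -
    have "distr M lborel (\<lambda>\<omega>. X 1 \<omega> + X 2 \<omega>) = convolution (distr M lborel (X 1)) (distr M lborel (X 2))"
      by (rule P.sum_indep_random_variable_lborel[OF ind12]; simp only: measurable_lborel1; measurable)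
    also have "\<dots> = convolution (density lborel (f 1)) (density lborel (f 2))" using Di by simp
    also have "\<dots> = density lborel (\<lambda>x. \<integral>\<^sup>+y. f 1 (x - y) * f 2 y \<partial>lborel)"
      by (rule convolution_density) (use fmeas fin in auto)
    also have "\<dots> = density lborel (\<lambda>x. ennreal (L2 (a 1) (a 2) (x - c 1 - c 2) / (a 1 * a 2)))"
      unfolding f_def using conv1[OF a1 a2] by simp
    finally show ?thesis .
  qed
  have D123: "distr M lborel (\<lambda>\<omega>. X 1 \<omega> + X 2 \<omega> + X 3 \<omega>)
      = density lborel (\<lambda>x. ennreal (pfun (a 1) (a 2) (a 3) (c 1 + c 2 + c 3) x))"
  proof -
    have "(\<lambda>\<omega>. X 1 \<omega> + X 2 \<omega> + X 3 \<omega>) = (\<lambda>\<omega>. X 3 \<omega> + (X 1 \<omega> + X 2 \<omega>))"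
      by (auto simp: add_ac)
    then have "distr M lborel (\<lambda>\<omega>. X 1 \<omega> + X 2 \<omega> + X 3 \<omega>) = distr M lborel (\<lambda>\<omega>. X 3 \<omega> + (X 1 \<omega> + X 2 \<omega>))"
      by simp
    also have "\<dots> = convolution (distr M lborel (X 3)) (distr M lborel (\<lambda>\<omega>. X 1 \<omega> + X 2 \<omega>))"
      by (rule P.sum_indep_random_variable_lborel[OF ind3]; simp only: measurable_lborel1; measurable)
    also have "\<dots> = convolution (density lborel (f 3)) (density lborel (\<lambda>x. ennreal (L2 (a 1) (a 2) (x - c 1 - c 2) / (a 1 * a 2))))"
      using Di D12 by simp
    also have "\<dots> = density lborel (\<lambda>x. \<integral>\<^sup>+y. f 3 (x - y) * ennreal (L2 (a 1) (a 2) (y - c 1 - c 2) / (a 1 * a 2)) \<partial>lborel)"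
    proof (rule convolution_density)
      show "(\<lambda>x. ennreal (L2 (a 1) (a 2) (x - c 1 - c 2) / (a 1 * a 2))) \<in> borel_measurable borel"
        unfolding L2_def by measurable
      have "prob_space (distr M lborel (\<lambda>\<omega>. X 1 \<omega> + X 2 \<omega>))"
        by (rule P.prob_space_distr; simp only: measurable_lborel1; measurable)
      then show "finite_measure (density lborel (\<lambda>x. ennreal (L2 (a 1) (a 2) (x - c 1 - c 2) / (a 1 * a 2))))"
        using D12 by (simp add: prob_space_def)
    qed (use fmeas fin in auto)
    also have "\<dots> = density lborel (\<lambda>x. ennreal (pfun (a 1) (a 2) (a 3) (c 1 + c 2 + c 3) x))"
      unfolding f_def using conv2[OF a1 a2 a3] by simp
    finally show ?thesis .
  qed
  let ?\<mu> = "distr M lborel (\<lambda>\<omega>. X 1 \<omega> + X 2 \<omega> + X 3 \<omega>)"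
  define C where "C = c 1 + c 2 + c 3"
  define p where "p = pfun (a 1) (a 2) (a 3) C"
  have acp: "ac_density ?\<mu> p"
    unfolding ac_density_def p_def C_def
    using D123 abs_cont_from_deriv[OF DERIV_pfun dfun_bound[OF a1 a2 a3]] pfun_nonneg[OF a1 a2 a3]
    by auto
  define q where "q = (SOME p. ac_density ?\<mu> p)"
  have acq: "ac_density ?\<mu> q" unfolding q_def using acp by (metis someI_ex)
  have cq: "continuous_on UNIV q" using acq abs_cont_imp_cont unfolding ac_density_def by blast
  have cp: "continuous_on UNIV p" using acp abs_cont_imp_cont unfolding ac_density_def by blast
  have qm[measurable]: "q \<in> borel_measurable borel" using cq by (rule borel_measurable_continuous_onI)
  have pm[measurable]: "p \<in> borel_measurable borel" using cp by (rule borel_measurable_continuous_onI)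
  have qp: "q = p"
  proof
    fix x
    have "AE x in lborel. ennreal (q x) = ennreal (p x)"
      by (rule sigma_finite_measure.density_unique[OF sigma_finite_lborel]) (use acq acp in \<open>auto simp: ac_density_def\<close>)
    then have "AE x in lborel. q x = p x"
      by eventually_elim (use acq acp in \<open>auto simp: ac_density_def\<close>)
    then show "q x = p x" by (rule cont_ae_eq[OF cq cp])
  qed
  have ex: "\<exists>p. ac_density ?\<mu> p" using acp by blast
  have "fisher_info ?\<mu> = (\<integral>\<^sup>+ x. indicator {x. 0 < p x} x * ennreal ((deriv p x)\<^sup>2 / p x) \<partial>lborel)"
  proof -
    have qeq: "(SOME p. ac_density ?\<mu> p) = p" using qp q_def by simp
    show ?thesis unfolding fisher_info_def if_P[OF ex] Let_def qeq ..
  qed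
  also have "\<dots> \<le> (\<integral>\<^sup>+ x. ennreal (2/(a 1 * a 2 * a 3)) * indicator {C..C + a 1 + a 2 + a 3} x \<partial>lborel)"
  proof (intro nn_integral_mono)
    fix x
    show "indicator {x. 0 < p x} x * ennreal ((deriv p x)\<^sup>2 / p x)
       \<le> ennreal (2/(a 1 * a 2 * a 3)) * indicator {C..C + a 1 + a 2 + a 3} x"
    proof (cases "0 < p x")
      case True
      have sup: "x \<in> {C..C + a 1 + a 2 + a 3}"
        using pfun_support[OF a1 a2 a3 True[unfolded p_def]] .
      have dd: "deriv p x = dfun (a 1) (a 2) (a 3) C x"
        unfolding p_def by (rule DERIV_imp_deriv[OF DERIV_pfun])
      have g: "(dfun (a 1) (a 2) (a 3) C x)^2 \<le> 2 * (1/(a 1 * a 2 * a 3)) * p x"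
        unfolding p_def
        by (rule glaeser[where K="1/(a 1 * a 2 * a 3)", OF DERIV_pfun pfun_nonneg[OF a1 a2 a3] _ dfun_lip[OF a1 a2 a3]])
           (use a1 a2 a3 in simp)
      have "(deriv p x)\<^sup>2 / p x \<le> 2/(a 1 * a 2 * a 3)"
        using g True dd by (simp add: pos_divide_le_eq)
      then show ?thesis using True sup by (simp add: ennreal_leI)
    qed simp
  qed
  also have "\<dots> = ennreal (2/(a 1 * a 2 * a 3)) * emeasure lborel {C..C + a 1 + a 2 + a 3}"
    by (rule nn_integral_cmult_indicator) auto
  also have "\<dots> = ennreal (2/(a 1 * a 2 * a 3)) * ennreal (a 1 + a 2 + a 3)"
  proof -
    have "emeasure lborel {C..C + a 1 + a 2 + a 3} = ennreal (C + a 1 + a 2 + a 3 - C)"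
      using a1 a2 a3 by (intro emeasure_lborel_Icc) simp
    also have "C + a 1 + a 2 + a 3 - C = a 1 + a 2 + a 3" by simp
    finally show ?thesis by (simp only:)
  qed
  also have "\<dots> = ennreal (2/(a 1 * a 2 * a 3) * (a 1 + a 2 + a 3))"
    by (rule ennreal_mult[symmetric]) (use a1 a2 a3 in simp_all)
  also have "2/(a 1 * a 2 * a 3) * (a 1 + a 2 + a 3) = 2 * (1 / (a 1 * a 2) + 1 / (a 1 * a 3) + 1 / (a 2 * a 3))"
    using a1 a2 a3 by (simp add: field_simps)
  finally show ?thesis by simp
qed

end
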